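(* Let $\mathcal B$ be a nonempty collection of $\mu$-measurable subsets of $2^\omega$ such that for every $B\in\mathcal B$, every clopen $D\subseteq2^\omega$ and every finite binary sequence $t$ with $N_t\cap D=\emptyset$, the set $D\cup t^\frown B$ belongs to $\mathcal B$. Then for every measurable $A\subseteq2^\omega$ and every $\varepsilon>0$ there is $B\in\mathcal B$ with $\mu(A\triangle B)<\varepsilon$; i.e. $\{[B]:B\in\mathcal B\}$ is topologically dense in $\mathrm{MALG}$.
   Context: $2^\omega$ is the Cantor space; $N_t=\{x:t\subset x\}$; $t^\frown B=\{t^\frown x: x\in B\}$ (concatenation). $\mu$ is the coin-tossing measure with $\mu(N_t)=2^{-\mathrm{lh}(t)}$. $\mathrm{MALG}$ is the measure algebra (measurable sets modulo null sets) with metric $\delta([A],[B])=\mu(A\triangle B)$. *)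

theory Defs
  imports "HOL-Probability.Probability"
begin

text \<open>Cantor space is modelled as the type nat \<Rightarrow> bool, with the product
  topology (bool carries the discrete/order topology).\<close>

definition cantor_measure :: "(nat \<Rightarrow> bool) measure" where
  "cantor_measure = (\<Pi>\<^sub>M i\<in>(UNIV::nat set). measure_pmf (bernoulli_pmf (1/2)))"

abbreviation mu_measurable :: "(nat \<Rightarrow> bool) set \<Rightarrow> bool" where
  "mu_measurable A \<equiv> A \<in> sets (completion cantor_measure)"

abbreviation mu :: "(nat \<Rightarrow> bool) set \<Rightarrow> real" where
  "mu A \<equiv> measure (completion cantor_measure) A"

definition cyl :: "bool list \<Rightarrow> (nat \<Rightarrow> bool) set" where
  "cyl t = {x. \<forall>i<length t. x i = t ! i}"

definition conc :: "bool list \<Rightarrow> (nat \<Rightarrow> bool) \<Rightarrow> (nat \<Rightarrow> bool)" where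
  "conc t x = (\<lambda>i. if i < length t then t ! i else x (i - length t))"

definition prepend :: "bool list \<Rightarrow> (nat \<Rightarrow> bool) set \<Rightarrow> (nat \<Rightarrow> bool) set" where
  "prepend t B = conc t ` B"

definition clopen_set :: "(nat \<Rightarrow> bool) set \<Rightarrow> bool" where
  "clopen_set D \<longleftrightarrow> open D \<and> closed D"

end

theory Submission
  imports Defs
begin

abbreviation "Bern \<equiv> measure_pmf (bernoulli_pmf (1/2))"

lemma space_cm[simp]: "space cantor_measure = UNIV"
  by (simp add: cantor_measure_def space_PiM)

lemma prob_cm: "prob_space cantor_measure"
  unfolding cantor_measure_def by (rule prob_space_PiM) (simp add: prob_space_measure_pmf)

lemma prob_cmc: "prob_space (completion cantor_measure)"
  using prob_space.prob_space_completion[OF prob_cm] .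

lemma clopen_box:
  assumes "finite J"
  shows "clopen_set {x::nat\<Rightarrow>bool. \<forall>j\<in>J. x j \<in> X j}"
proof -
  have eq: "{x::nat\<Rightarrow>bool. \<forall>j\<in>J. x j \<in> X j} = (\<Inter>j\<in>J. (\<lambda>x. x j) -` X j)" by auto
  have o: "open ((\<lambda>x::nat\<Rightarrow>bool. x j) -` X j)" for j
    using discrete_topology_class.open_discrete[of "X j"] by (intro continuous_intros) auto
  have c: "closed ((\<lambda>x::nat\<Rightarrow>bool. x j) -` X j)" for j
    using discrete_topology_class.open_discrete[of "- X j"] by (intro continuous_intros) (auto simp: closed_open)
  show ?thesis unfolding clopen_set_def eq
    using o c assms by (auto intro!: open_INT closed_INT)
qed

lemma clopen_diff: "clopen_set A \<Longrightarrow> clopen_set B \<Longrightarrow> clopen_set (A - B)"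
  unfolding clopen_set_def by (auto intro: open_Diff closed_Diff)

lemma clopen_compl: "clopen_set A \<Longrightarrow> clopen_set (UNIV - A)"
  using clopen_diff[of UNIV A] by (simp add: clopen_set_def)

lemma clopen_UN: "finite I \<Longrightarrow> (\<And>i. i \<in> I \<Longrightarrow> clopen_set (C i)) \<Longrightarrow> clopen_set (\<Union>i\<in>I. C i)"
  unfolding clopen_set_def by (auto intro!: open_UN closed_UN)

definition approx :: "(nat \<Rightarrow> bool) set \<Rightarrow> bool" where
  "approx S \<longleftrightarrow> (\<forall>e>0. \<exists>C. clopen_set C \<and> C \<in> sets cantor_measure \<and> mu ((S - C) \<union> (C - S)) < e)"

lemma sets_cm: "sets cantor_measure = sigma_sets UNIV (prod_algebra UNIV (\<lambda>_. Bern))"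
  unfolding cantor_measure_def sets_PiM by simp

lemma approx_gen:
  assumes "S \<in> prod_algebra UNIV (\<lambda>_. Bern)"
  shows "approx S"
proof -
  obtain J X where J: "finite J" and S: "S = prod_emb UNIV (\<lambda>_. Bern) J (\<Pi>\<^sub>E j\<in>J. X j)"
    using assms unfolding prod_algebra_def by auto
  have S': "S = {x. \<forall>j\<in>J. x j \<in> X j}"
    unfolding S prod_emb_def by (auto simp: PiE_def Pi_def)
  have "S \<in> sets cantor_measure" unfolding sets_cm using assms by auto
  then show ?thesis unfolding approx_def
    by (intro allI impI exI[of _ S]) (simp add: S' clopen_box J)
qed

lemma approx_all:
  assumes "S \<in> sets cantor_measure"
  shows "approx S"
proof -
  interpret P: prob_space "completion cantor_measure" by (rule prob_cmc)
  have "S \<in> sigma_sets UNIV (prod_algebra UNIV (\<lambda>_. Bern))" using assms sets_cm by simp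
  then show ?thesis
  proof (induction rule: sigma_sets.induct)
    case (Basic a) then show ?case by (rule approx_gen)
  next
    case Empty then show ?case unfolding approx_def
      by (intro allI impI exI[of _ "{}"]) (simp add: clopen_set_def)
  next
    case (Compl a)
    show ?case unfolding approx_def
    proof (intro allI impI)
      fix e :: real assume "e > 0"
      then obtain C where C: "clopen_set C" "C \<in> sets cantor_measure" "mu ((a - C) \<union> (C - a)) < e"
        using Compl.IH unfolding approx_def by blast
      have "((UNIV - a) - (UNIV - C)) \<union> ((UNIV - C) - (UNIV - a)) = (a - C) \<union> (C - a)" by auto
      moreover have "UNIV - C \<in> sets cantor_measure"
        using C(2) sets.compl_sets[of C cantor_measure] by simp
      ultimately show "\<exists>C'. clopen_set C' \<and> C' \<in> sets cantor_measure \<and> mu ((UNIV - a - C') \<union> (C' - (UNIV - a))) < e"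
        using C by (intro exI[of _ "UNIV - C"]) (simp add: clopen_compl)
    qed
  next
    case (Union a)
    have aS: "a i \<in> sets cantor_measure" for i using Union.hyps sets_cm by simp
    show ?case unfolding approx_def
    proof (intro allI impI)
      fix e :: real assume e: "e > 0"
      define F where "F n = (\<Union>i<n. a i)" for n
      have Fs: "F n \<in> sets cantor_measure" for n unfolding F_def using aS by auto
      have inc: "incseq F" unfolding F_def incseq_def by (meson UN_mono lessThan_subset_iff order_refl)
      have UF: "(\<Union>n. F n) = (\<Union>i. a i)" unfolding F_def by blast
      have lim: "(\<lambda>n. mu (F n)) \<longlonglongrightarrow> mu (\<Union>i. a i)"
        using P.finite_Lim_measure_incseq[of F] Fs inc UF by auto
      have "eventually (\<lambda>n. mu (F n) > mu (\<Union>i. a i) - e/2) sequentially"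
        using order_tendstoD(1)[OF lim] e by simp
      then obtain n where n: "mu (F n) > mu (\<Union>i. a i) - e/2"
        by (auto simp: eventually_sequentially)
      define e' where "e' = e / (2 * (real n + 1))"
      have e': "e' > 0" unfolding e'_def using e by simp
      have "\<forall>i. \<exists>C. clopen_set C \<and> C \<in> sets cantor_measure \<and> mu ((a i - C) \<union> (C - a i)) < e'"
        using Union.IH e' unfolding approx_def by blast
      then obtain C where C: "\<And>i. clopen_set (C i)" "\<And>i. C i \<in> sets cantor_measure"
          "\<And>i. mu ((a i - C i) \<union> (C i - a i)) < e'"
        by metis
      define C' where "C' = (\<Union>i<n. C i)"
      have C'c: "clopen_set C'" unfolding C'_def using C(1) by (intro clopen_UN) auto
      have C's: "C' \<in> sets cantor_measure" unfolding C'_def using C(2) by auto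
      let ?S = "\<Union>i. a i"
      have Ss: "?S \<in> sets cantor_measure" using aS by auto
      have sub: "(?S - C') \<union> (C' - ?S) \<subseteq> (?S - F n) \<union> (\<Union>i<n. (a i - C i) \<union> (C i - a i))"
        unfolding C'_def F_def by blast
      have sub': "F n \<subseteq> ?S" unfolding F_def by auto
      have "mu (?S - F n) = mu ?S - mu (F n)"
        using P.finite_measure_Diff[of ?S "F n"] Ss Fs sub' by auto
      then have m1: "mu (?S - F n) < e/2" using n by linarith
      have m2: "mu (\<Union>i<n. (a i - C i) \<union> (C i - a i)) \<le> (\<Sum>i<n. mu ((a i - C i) \<union> (C i - a i)))"
        using aS C(2) by (intro P.finite_measure_subadditive_finite) auto
      also have "\<dots> \<le> (\<Sum>i<n. e')" using C(3) by (intro sum_mono) (simp add: less_imp_le)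
      also have "\<dots> = real n * e'" by simp
      also have "\<dots> \<le> e/2" unfolding e'_def using e by (simp add: field_simps)
      finally have m2': "mu (\<Union>i<n. (a i - C i) \<union> (C i - a i)) \<le> e/2" .
      have "mu ((?S - C') \<union> (C' - ?S)) \<le> mu ((?S - F n) \<union> (\<Union>i<n. (a i - C i) \<union> (C i - a i)))"
        using sub aS C(2) Fs by (intro P.finite_measure_mono) auto
      also have "\<dots> \<le> mu (?S - F n) + mu (\<Union>i<n. (a i - C i) \<union> (C i - a i))"
        using aS C(2) Fs by (intro measure_Un_le) auto
      finally have "mu ((?S - C') \<union> (C' - ?S)) < e" using m1 m2' by simp
      then show "\<exists>C. clopen_set C \<and> C \<in> sets cantor_measure \<and> mu ((?S - C) \<union> (C - ?S)) < e"
        using C'c C's by blast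
    qed
  qed
qed

lemma cyl_rep: "cyl (replicate k False) = {x. \<forall>j\<in>{..<k}. x j \<in> {False}}"
  unfolding cyl_def by auto

lemma cyl_eq: "cyl (replicate k False) = prod_emb UNIV (\<lambda>_. Bern) {..<k} (\<Pi>\<^sub>E j\<in>{..<k}. {False})"
  unfolding cyl_rep prod_emb_def by (auto simp: PiE_iff fun_eq_iff restrict_def extensional_def)

lemma cyl_sets: "cyl (replicate k False) \<in> sets cantor_measure"
  unfolding cyl_eq cantor_measure_def by (rule sets_PiM_I) auto

lemma mu_cyl: "mu (cyl (replicate k False)) = (1/2)^k"
proof -
  note eq = cyl_eq
  have "emeasure cantor_measure (cyl (replicate k False)) = (\<Prod>i\<in>{..<k}. emeasure Bern {False})"
    unfolding eq cantor_measure_def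
    by (rule emeasure_PiM_emb) (auto simp: prob_space_measure_pmf)
  also have "\<dots> = ennreal ((1/2)^k)"
  proof -
    have e: "emeasure Bern {False} = ennreal (1/2)" by (subst emeasure_pmf_single) auto
    show ?thesis by (simp only: e prod_constant card_lessThan ennreal_power)
  qed
  finally have "measure cantor_measure (cyl (replicate k False)) = (1/2)^k"
    by (simp add: measure_def)
  moreover note cyl_sets
  ultimately show ?thesis by simp
qed

lemma prepend_sub: "prepend t B \<subseteq> cyl t"
  unfolding prepend_def cyl_def conc_def by auto

theorem lemma2p1:
  fixes \<B> :: "(nat \<Rightarrow> bool) set set" and A :: "(nat \<Rightarrow> bool) set" and \<epsilon> :: real
  assumes "\<B> \<noteq> {}"
    and "\<forall>B\<in>\<B>. mu_measurable B"
    and "\<forall>B\<in>\<B>. \<forall>D t. clopen_set D \<and> cyl t \<inter> D = {} \<longrightarrow> D \<union> prepend t B \<in> \<B>"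
    and "mu_measurable A"
    and "\<epsilon> > 0"
  shows "\<exists>B\<in>\<B>. mu ((A - B) \<union> (B - A)) < \<epsilon>"
proof -
  interpret P: prob_space "completion cantor_measure" by (rule prob_cmc)
  obtain S N N' where A: "A = S \<union> N" "N \<subseteq> N'" "N' \<in> null_sets cantor_measure" "S \<in> sets cantor_measure"
    using assms(4) by (rule sets_completionE)
  obtain C where C: "clopen_set C" "C \<in> sets cantor_measure" "mu ((S - C) \<union> (C - S)) < \<epsilon>/2"
    using approx_all[OF A(4)] assms(5) unfolding approx_def by (meson half_gt_zero)
  obtain k where k: "(1/2::real)^k < \<epsilon>/2" using real_arch_pow_inv[of "\<epsilon>/2" "1/2"] assms(5) by auto
  define t where "t = replicate k False"
  obtain B0 where B0: "B0 \<in> \<B>" using assms(1) by auto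
  define B where "B = (C - cyl t) \<union> prepend t B0"
  have cc: "clopen_set (cyl t)" unfolding t_def cyl_rep by (rule clopen_box) simp
  have cs: "cyl t \<in> sets cantor_measure"
    unfolding t_def by (rule cyl_sets)
  have "B \<in> \<B>" unfolding B_def using assms(3) B0 clopen_diff[OF C(1) cc] by blast
  have sub: "(A - B) \<union> (B - A) \<subseteq> ((S - C) \<union> (C - S)) \<union> N' \<union> cyl t"
    unfolding B_def A(1) using A(2) prepend_sub[of t B0] by blast
  have N0: "mu N' = 0" using A(3) by (simp add: null_sets_def measure_def)
  have "mu ((A - B) \<union> (B - A)) \<le> mu (((S - C) \<union> (C - S)) \<union> N' \<union> cyl t)"
    using sub A C cs by (intro P.finite_measure_mono) auto
  also have "\<dots> \<le> mu ((S - C) \<union> (C - S)) + mu N' + mu (cyl t)"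
    using A C cs measure_Un_le by (smt (verit) null_setsD2 sets.Diff sets.Un sets_completionI_sets)
  also have "\<dots> < \<epsilon>" using C(3) N0 k mu_cyl unfolding t_def by simp
  finally show ?thesis using \<open>B \<in> \<B>\<close> by blast
qed

end
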